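(* Let $n\ge 1$, $d\ge 2$, and let $P\in\mathbb{C}[x_0,\dots,x_n]$ be a nonzero homogeneous polynomial of degree $d$. Then $$\mathrm{r}(P)\le (\mathrm{Cr}(P)-1)d+2-\mathrm{Cr}(P).$$
   Context: The rank $\mathrm{r}(P)$ of a degree $d$ form $P$ is the minimum $r$ such that $P=L_1^d+\cdots+L_r^d$ for some linear forms $L_1,\dots,L_r\in\mathbb{C}[x_0,\dots,x_n]$. Let $N=\binom{n+d}{d}-1$ and let $\nu_d:\mathbb{P}^n\to\mathbb{P}^N$ be the degree $d$ Veronese embedding, with image $X_{n,d}$; $[P]\in\mathbb{P}^N$ denotes the projective class of $P$ (so $\mathrm{r}(P)$ is the minimal number of points of $X_{n,d}$ whose linear span contains $[P]$). A zero-dimensional scheme $Z\subset\mathbb{P}^N$ is curvilinear if the Zariski tangent space at each point of its support has dimension $\le 1$ (equivalently, each connected component is of the form $\mathcal{O}_{C,Q}/\mathfrak{m}_Q^{e}$ for a smooth point $Q$ of a reduced curve $C$). The curvilinear rank is $\mathrm{Cr}(P)=\min\{\deg(Z): Z\subset X_{n,d}$ a zero-dimensional curvilinear scheme with $[P]\in\langle Z\rangle\}$, where $\langle Z\rangle$ is the linear span of $Z$. *)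

theory Defs
  imports Complex_Main "HOL-Computational_Algebra.Polynomial"
begin

text \<open>Forms in C[x_0,...,x_n] are represented as polynomial functions on
  vectors x :: nat => complex depending only on x_0,...,x_n (over the infinite
  field C, polynomials and polynomial functions coincide).\<close>

definition lin_form :: "nat \<Rightarrow> (nat \<Rightarrow> complex) \<Rightarrow> (nat \<Rightarrow> complex) \<Rightarrow> complex" where
  "lin_form n a x = (\<Sum>j\<le>n. a j * x j)"

definition exps :: "nat \<Rightarrow> nat \<Rightarrow> (nat \<Rightarrow> nat) set" where
  "exps n d = {\<alpha>. (\<forall>j>n. \<alpha> j = 0) \<and> (\<Sum>j\<le>n. \<alpha> j) = d}"

definition is_form :: "nat \<Rightarrow> nat \<Rightarrow> ((nat \<Rightarrow> complex) \<Rightarrow> complex) \<Rightarrow> bool" where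
  "is_form n d P \<longleftrightarrow> (\<exists>c. P = (\<lambda>x. \<Sum>\<alpha>\<in>exps n d. c \<alpha> * (\<Prod>j\<le>n. x j ^ \<alpha> j)))"

definition waring_rank :: "nat \<Rightarrow> nat \<Rightarrow> ((nat \<Rightarrow> complex) \<Rightarrow> complex) \<Rightarrow> nat" where
  "waring_rank n d P =
     (LEAST r. \<exists>L :: nat \<Rightarrow> nat \<Rightarrow> complex. P = (\<lambda>x. \<Sum>i<r. lin_form n (L i) x ^ d))"

definition proportional :: "nat \<Rightarrow> (nat \<Rightarrow> complex) \<Rightarrow> (nat \<Rightarrow> complex) \<Rightarrow> bool" where
  "proportional n a b \<longleftrightarrow> (\<exists>c. \<forall>j\<le>n. b j = c * a j)"

text \<open>A curvilinear component of length e supported at [A 0] is the image of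
  Spec C[t]/(t^e) under the jet L(t) = A 0 + t A 1 + ... + t^(e-1) A (e-1)
  (a closed embedding: A 0 nonzero, and A 1 not proportional to A 0 if e >= 2).
  The linear span of its image under nu_d is spanned by the coefficients of
  t^k, k < e, in L(t)^d.\<close>
definition jet_power_coeff ::
  "nat \<Rightarrow> nat \<Rightarrow> (nat \<Rightarrow> nat \<Rightarrow> complex) \<Rightarrow> nat \<Rightarrow> nat \<Rightarrow> (nat \<Rightarrow> complex) \<Rightarrow> complex" where
  "jet_power_coeff n d A e k x = coeff ((\<Sum>m<e. monom (lin_form n (A m) x) m) ^ d) k"

definition curvilinear_data ::
  "nat \<Rightarrow> nat \<Rightarrow> (nat \<Rightarrow> nat) \<Rightarrow> (nat \<Rightarrow> nat \<Rightarrow> nat \<Rightarrow> complex) \<Rightarrow> bool" where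
  "curvilinear_data n s e A \<longleftrightarrow>
     (\<forall>i<s. 1 \<le> e i \<and> (\<exists>j\<le>n. A i 0 j \<noteq> 0) \<and>
            (2 \<le> e i \<longrightarrow> \<not> proportional n (A i 0) (A i 1))) \<and>
     (\<forall>i<s. \<forall>i'<s. i \<noteq> i' \<longrightarrow> \<not> proportional n (A i 0) (A i' 0))"

definition in_curvilinear_span ::
  "nat \<Rightarrow> nat \<Rightarrow> nat \<Rightarrow> (nat \<Rightarrow> nat) \<Rightarrow> (nat \<Rightarrow> nat \<Rightarrow> nat \<Rightarrow> complex)
     \<Rightarrow> ((nat \<Rightarrow> complex) \<Rightarrow> complex) \<Rightarrow> bool" where
  "in_curvilinear_span n d s e A P \<longleftrightarrow>
     (\<exists>c :: nat \<Rightarrow> nat \<Rightarrow> complex.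
        P = (\<lambda>x. \<Sum>i<s. \<Sum>k<e i. c i k * jet_power_coeff n d (A i) (e i) k x))"

definition curvilinear_rank :: "nat \<Rightarrow> nat \<Rightarrow> ((nat \<Rightarrow> complex) \<Rightarrow> complex) \<Rightarrow> nat" where
  "curvilinear_rank n d P =
     (LEAST r. \<exists>s e A. curvilinear_data n s e A \<and> (\<Sum>i<s. e i) = r \<and>
                        in_curvilinear_span n d s e A P)"

end

theory Submission
  imports Defs "HOL-Computational_Algebra.Fundamental_Theorem_Algebra" "HOL-Computational_Algebra.Polynomial_FPS"
begin


definition lagr :: "complex set \<Rightarrow> complex \<Rightarrow> complex poly" where
 "lagr S z = smult (inverse (\<Prod>w\<in>S-{z}. z - w)) (\<Prod>w\<in>S-{z}. [:-w,1:])"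

lemma lagr_degree: assumes "finite S" "z \<in> S" shows "degree (lagr S z) \<le> card S - 1"
proof -
  have "degree (lagr S z) \<le> degree (\<Prod>w\<in>S-{z}. [:-w,1:])"
    unfolding lagr_def by (rule degree_smult_le)
  also have "\<dots> \<le> sum (degree \<circ> (\<lambda>w. [:-w,1:])) (S-{z})"
    by (rule degree_prod_sum_le) (use assms in auto)
  also have "\<dots> = card (S-{z})" by simp
  also have "\<dots> = card S - 1" using assms by simp
  finally show ?thesis .
qed

lemma lagr_poly: assumes "finite S" "z \<in> S" "w \<in> S"
  shows "poly (lagr S z) w = (if w = z then 1 else 0)"
proof (cases "w = z")
  case True
  have "(\<Prod>w\<in>S-{z}. z - w) \<noteq> 0" using assms by (simp add: prod_zero_iff)
  then show ?thesis using True by (simp add: lagr_def poly_prod)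
next
  case False
  then have "(\<Prod>u\<in>S-{z}. poly [:-u,1:] w) = 0"
    using assms by (subst prod_zero_iff) auto
  then show ?thesis using False by (simp add: lagr_def poly_prod)
qed

lemma poly_zero_many_roots:
  fixes p :: "complex poly"
  assumes "finite S" "degree p < card S" "\<forall>z\<in>S. poly p z = 0" shows "p = 0"
proof (rule ccontr)
  assume "p \<noteq> 0"
  then have "card {x. poly p x = 0} \<le> degree p" by (rule card_poly_roots_bound)
  moreover have "card S \<le> card {x. poly p x = 0}"
    using assms \<open>p \<noteq> 0\<close> by (intro card_mono poly_roots_finite) auto
  ultimately show False using assms by simp
qed

lemma interp:
  fixes p :: "complex poly"
  assumes "finite S" "degree p < card S"
  shows "p = (\<Sum>z\<in>S. smult (poly p z) (lagr S z))"
proof -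
  let ?q = "p - (\<Sum>z\<in>S. smult (poly p z) (lagr S z))"
  have "degree (\<Sum>z\<in>S. smult (poly p z) (lagr S z)) < card S"
  proof (rule degree_sum_le[THEN le_less_trans])
    show "finite S" by fact
    fix z assume "z \<in> S"
    then show "degree (smult (poly p z) (lagr S z)) \<le> card S - 1"
      using lagr_degree[OF assms(1)] degree_smult_le order_trans by blast
  next
    show "card S - 1 < card S" using assms by linarith
  qed
  then have "degree ?q \<le> card S - 1" using assms
    by (intro degree_diff_le) auto
  then have "degree ?q < card S" using assms by linarith
  moreover have "\<forall>z\<in>S. poly ?q z = 0"
  proof
    fix w assume w: "w \<in> S"
    have "(\<Sum>z\<in>S. poly p z * poly (lagr S z) w) = poly p w"
      using w assms(1) by (simp add: lagr_poly if_distrib cong: if_cong)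
    then show "poly ?q w = 0" by (simp add: poly_sum)
  qed
  ultimately have "?q = 0" using poly_zero_many_roots assms by blast
  then show ?thesis by simp
qed

lemma rsf_card:
  fixes p :: "complex poly"
  assumes "rsquarefree p" shows "card {z. poly p z = 0} = degree p"
proof -
  have p0: "p \<noteq> 0" using assms by (simp add: rsquarefree_def)
  have fin: "finite {z. poly p z = 0}" using p0 by (rule poly_roots_finite)
  have "degree p = degree (smult (lead_coeff p) (\<Prod>z|poly p z = 0. [:-z, 1:]))"
    using complex_poly_decompose_rsquarefree[OF assms] by simp
  also have "\<dots> = degree (\<Prod>z|poly p z = 0. [:-z, 1:])" using p0 by simp
  also have "\<dots> = (\<Sum>z|poly p z = 0. degree [:-z, 1:])"
    by (rule degree_prod_eq_sum_degree) auto
  also have "\<dots> = card {z. poly p z = 0}" by simp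
  finally show ?thesis by simp
qed

lemma coeff_C_mult:
  fixes c :: "nat \<Rightarrow> complex"
  shows "coeff ((\<Sum>k<e. monom (c k) (e-1-k)) * F) (e-1) = (\<Sum>k<e. c k * coeff F k)"
proof -
  have "coeff ((\<Sum>k<e. monom (c k) (e-1-k)) * F) (e-1)
        = (\<Sum>k<e. coeff (monom (c k) (e-1-k) * F) (e-1))"
    by (simp add: sum_distrib_right coeff_sum)
  also have "\<dots> = (\<Sum>k<e. c k * coeff F k)"
    by (intro sum.cong refl) (auto simp: coeff_monom_mult)
  finally show ?thesis .
qed

lemma lemU:
  fixes c :: "nat \<Rightarrow> complex"
  assumes d2: "2 \<le> d" and e1: "1 \<le> e" and ce: "c (e-1) \<noteq> 0"
  shows "\<exists>S a. finite S \<and> card S = d*(e-1) + 2 - e \<and>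
     (\<forall>F::complex poly. degree F \<le> d*(e-1) \<longrightarrow>
        (\<Sum>k<e. c k * coeff F k) = (\<Sum>z\<in>S. a z * poly F z))"
proof -
  define D where "D = d*(e-1)"
  define N where "N = D + 2 - e"
  have DN: "2*(e-1) \<le> D" unfolding D_def using d2 by (intro mult_right_mono) auto
  have eN: "e \<le> N" and N1: "1 \<le> N" and ND: "N - 1 \<le> D" and NDe: "D - N = e - 2"
    using DN e1 unfolding N_def by auto
  define C where "C = (\<Sum>k<e. monom (c k) (e-1-k))"
  have phiC: "\<And>F. coeff (C*F) (e-1) = (\<Sum>k<e. c k * coeff F k)"
    unfolding C_def by (rule coeff_C_mult)
  have C0: "coeff C 0 = c (e-1)"
  proof -
    have "coeff C 0 = (\<Sum>k<e. if k = e-1 then c k else 0)"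
      unfolding C_def coeff_sum by (intro sum.cong refl) (auto simp: coeff_monom)
    also have "\<dots> = c (e-1)" using e1 by (simp add: sum.delta)
    finally show ?thesis .
  qed
  define I where "I = inverse (fps_of_poly C)"
  define b where "b = (\<Sum>i<e. monom (fps_nth I i) i)"
  have coeffb: "\<And>j. coeff b j = (if j < e then fps_nth I j else 0)"
    unfolding b_def coeff_sum by (auto simp: coeff_monom sum.delta)
  have Cb: "\<And>k. k < e \<Longrightarrow> coeff (C*b) k = (if k = 0 then 1 else 0)"
  proof -
    fix k assume k: "k < e"
    have "coeff (C*b) k = (\<Sum>i\<le>k. coeff C i * coeff b (k-i))" by (rule coeff_mult)
    also have "\<dots> = (\<Sum>i=0..k. fps_nth (fps_of_poly C) i * fps_nth I (k-i))"
      using k by (auto simp: coeffb atLeast0AtMost intro!: sum.cong)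
    also have "\<dots> = fps_nth (fps_of_poly C * I) k" by (simp add: fps_mult_nth)
    also have "fps_of_poly C * I = 1" unfolding I_def
      by (rule inverse_mult_eq_1') (use C0 ce in simp)
    finally show "coeff (C*b) k = (if k = 0 then 1 else 0)" by simp
  qed
  have degb: "degree b < e"
  proof -
    have "degree b \<le> e - 1" by (rule degree_le) (auto simp: coeffb)
    then show ?thesis using e1 by linarith
  qed
  have b0: "coeff b 0 \<noteq> 0"
  proof
    assume "coeff b 0 = 0"
    then have "coeff (C*b) 0 = 0" by (simp add: coeff_mult)
    then show False using Cb[of 0] e1 by simp
  qed
  define w where "w = [:0,1:] * pderiv b - smult (of_nat N) b"
  have w0: "w \<noteq> 0"
  proof
    assume "w = 0"
    then have "coeff w 0 = 0" by simp
    then show False using b0 N1 by (simp add: w_def)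
  qed
  define Z where "Z = {z. poly w z = 0}"
  have finZ: "finite Z" unfolding Z_def using w0 by (rule poly_roots_finite)
  define Bad where "Bad = insert 0 ((\<lambda>z. - poly b z / z^N) ` Z)"
  have "finite Bad" unfolding Bad_def using finZ by simp
  then obtain \<mu> :: complex where mu: "\<mu> \<notin> Bad"
    using ex_new_if_finite[OF infinite_UNIV_char_0] by blast
  have mu0: "\<mu> \<noteq> 0" using mu by (simp add: Bad_def)
  define h where "h = b + monom \<mu> N"
  have degh: "degree h = N"
    unfolding h_def using degb eN mu0 by (subst degree_add_eq_right) (auto simp: degree_monom_eq)
  have rsf: "rsquarefree h"
    unfolding rsquarefree_roots
  proof (intro allI notI)
    fix z assume "poly h z = 0 \<and> poly (pderiv h) z = 0"
    then have hz: "poly b z + \<mu> * z^N = 0"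
      and hz': "poly (pderiv b) z + of_nat N * \<mu> * z^(N-1) = 0"
      by (auto simp: h_def pderiv_add pderiv_monom poly_monom)
    have z0: "z \<noteq> 0"
    proof
      assume "z = 0"
      then have "poly b z = coeff b 0" by (simp add: poly_0_coeff_0)
      then show False using hz \<open>z = 0\<close> N1 b0 by (simp add: power_0_left)
    qed
    have zz: "z * z^(N-1) = z^N" using N1 by (metis Suc_diff_le diff_Suc_1 power_Suc)
    have "poly w z = z * poly (pderiv b) z - of_nat N * poly b z" by (simp add: w_def)
    also have "\<dots> = z * (- (of_nat N * \<mu> * z^(N-1))) - of_nat N * (- (\<mu> * z^N))"
    proof -
      have 1: "poly b z = - (\<mu> * z^N)" using hz by (simp add: eq_neg_iff_add_eq_0)
      have 2: "poly (pderiv b) z = - (of_nat N * \<mu> * z^(N-1))" using hz' by (simp add: eq_neg_iff_add_eq_0)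
      show ?thesis unfolding 1 2 ..
    qed
    also have "\<dots> = 0" using zz by (simp add: algebra_simps)
    finally have "z \<in> Z" by (simp add: Z_def)
    moreover have "\<mu> = - poly b z / z^N" using hz z0 by (simp add: field_simps eq_neg_iff_add_eq_0)
    ultimately have "\<mu> \<in> Bad" by (simp add: Bad_def)
    then show False using mu by simp
  qed
  define S where "S = {z. poly h z = 0}"
  have h0: "h \<noteq> 0" using rsf by (simp add: rsquarefree_def)
  have finS: "finite S" unfolding S_def using h0 by (rule poly_roots_finite)
  have cardS: "card S = N" unfolding S_def using rsf degh by (simp add: rsf_card)
  have kill: "\<And>q. degree (h*q) \<le> D \<Longrightarrow> coeff (C*(h*q)) (e-1) = 0"
  proof -
    fix q assume dq: "degree (h*q) \<le> D"
    have qe: "coeff q (e-1) = 0"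
    proof (cases "q = 0")
      case False
      then have "degree (h*q) = N + degree q" using h0 degh by (simp add: degree_mult_eq)
      moreover have "N = D + 2 - e" "e \<le> D + 2" using N_def DN e1 by auto
      ultimately have "degree q < e - 1" using dq by linarith
      then show ?thesis by (simp add: coeff_eq_0)
    qed simp
    have "C*(h*q) = (C*b)*q + monom \<mu> N * (C*q)" by (simp add: h_def algebra_simps)
    then have "coeff (C*(h*q)) (e-1) = coeff ((C*b)*q) (e-1)"
      using eN e1 by (simp add: coeff_monom_mult)
    also have "\<dots> = (\<Sum>i\<le>e-1. coeff (C*b) i * coeff q (e-1-i))" by (rule coeff_mult)
    also have "\<dots> = (\<Sum>i\<le>e-1. if i = 0 then coeff q (e-1) else 0)"
      using e1 by (intro sum.cong refl) (auto simp: Cb)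
    also have "\<dots> = 0" using qe by simp
    finally show "coeff (C*(h*q)) (e-1) = 0" .
  qed
  define a where "a z = coeff (C * lagr S z) (e-1)" for z
  have main: "\<forall>F::complex poly. degree F \<le> D \<longrightarrow>
        (\<Sum>k<e. c k * coeff F k) = (\<Sum>z\<in>S. a z * poly F z)"
  proof (intro allI impI)
    fix F :: "complex poly" assume dF: "degree F \<le> D"
    define G where "G = F - (\<Sum>z\<in>S. smult (poly F z) (lagr S z))"
    have dG: "degree G \<le> D"
      unfolding G_def
    proof (intro degree_diff_le dF degree_sum_le[THEN order_trans])
      show "finite S" by fact
      fix z assume "z \<in> S"
      then show "degree (smult (poly F z) (lagr S z)) \<le> D"
        using lagr_degree[OF finS] degree_smult_le cardS ND order_trans by metis
    qed simp
    have Gz: "\<forall>z\<in>S. poly G z = 0"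
    proof
      fix u assume u: "u \<in> S"
      have "(\<Sum>z\<in>S. poly F z * poly (lagr S z) u) = poly F u"
        using u finS by (simp add: lagr_poly if_distrib cong: if_cong)
      then show "poly G u = 0" by (simp add: G_def poly_sum)
    qed
    have Gm: "G mod h = 0"
    proof (rule poly_zero_many_roots[OF finS])
      show "degree (G mod h) < card S"
      proof (cases "G mod h = 0")
        case True then show ?thesis using cardS N1 by simp
      next
        case False then show ?thesis using degree_mod_less'[OF h0 False] degh cardS by simp
      qed
      show "\<forall>z\<in>S. poly (G mod h) z = 0"
      proof
        fix z assume z: "z \<in> S"
        have "G mod h = G - G div h * h" by (simp add: minus_div_mult_eq_mod)
        then have "poly (G mod h) z = poly G z - poly (G div h) z * poly h z" by simp
        then show "poly (G mod h) z = 0" using Gz z by (simp add: S_def)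
      qed
    qed
    then have "G = h * (G div h)" by (metis add_0_right div_mult_mod_eq mult.commute)
    then have "coeff (C*G) (e-1) = 0" using kill dG by metis
    moreover have "C*F = C*G + (\<Sum>z\<in>S. smult (poly F z) (C * lagr S z))"
      by (simp add: G_def algebra_simps sum_distrib_left mult_smult_right)
    ultimately have "coeff (C*F) (e-1) = (\<Sum>z\<in>S. a z * poly F z)"
      by (simp add: coeff_sum a_def mult.commute)
    then show "(\<Sum>k<e. c k * coeff F k) = (\<Sum>z\<in>S. a z * poly F z)" using phiC by simp
  qed
  show ?thesis using main finS cardS unfolding N_def D_def by blast
qed



definition sumpow :: "nat \<Rightarrow> nat \<Rightarrow> nat \<Rightarrow> ((nat \<Rightarrow> complex) \<Rightarrow> complex) \<Rightarrow> bool" where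
  "sumpow n d r P \<longleftrightarrow> (\<exists>L :: nat \<Rightarrow> nat \<Rightarrow> complex. P = (\<lambda>x. \<Sum>i<r. lin_form n (L i) x ^ d))"

lemma lin_form_zero: "lin_form n (\<lambda>j. 0) x = 0" by (simp add: lin_form_def)

lemma lin_form_scale: "lin_form n (\<lambda>j. b * a j) x = b * lin_form n a x"
  by (simp add: lin_form_def sum_distrib_left mult.assoc)

lemma lin_form_add_scale: "lin_form n (\<lambda>j. a j + t * b j) x = lin_form n a x + t * lin_form n b x"
  by (simp add: lin_form_def sum.distrib sum_distrib_left algebra_simps)

lemma sumpow_zero: "sumpow n d 0 (\<lambda>x. 0)" by (simp add: sumpow_def)

lemma sumpow_one: "sumpow n d 1 (\<lambda>x. lin_form n v x ^ d)"
  unfolding sumpow_def by (rule exI[of _ "\<lambda>i. v"]) simp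

lemma sum_lessThan_add_split: "(\<Sum>i<r1+r2. g i) = (\<Sum>i<r1. g i) + (\<Sum>i<r2. g (r1+i))"
  for g :: "nat \<Rightarrow> 'a::comm_monoid_add"
  by (induction r2) (simp_all add: add.assoc)

lemma sumpow_add:
  assumes "sumpow n d r1 P" "sumpow n d r2 Q"
  shows "sumpow n d (r1+r2) (\<lambda>x. P x + Q x)"
proof -
  obtain L1 where L1: "P = (\<lambda>x. \<Sum>i<r1. lin_form n (L1 i) x ^ d)" using assms(1) sumpow_def by auto
  obtain L2 where L2: "Q = (\<lambda>x. \<Sum>i<r2. lin_form n (L2 i) x ^ d)" using assms(2) sumpow_def by auto
  define L where "L i = (if i < r1 then L1 i else L2 (i - r1))" for i
  have "(\<lambda>x. P x + Q x) = (\<lambda>x. \<Sum>i<r1+r2. lin_form n (L i) x ^ d)"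
    by (simp add: sum_lessThan_add_split L1 L2 L_def)
  then show ?thesis unfolding sumpow_def by blast
qed

lemma sumpow_mono:
  assumes "1 \<le> d" "r \<le> r'" "sumpow n d r P" shows "sumpow n d r' P"
proof -
  have "sumpow n d (r' - r) (\<lambda>x. 0)"
    unfolding sumpow_def using assms(1)
    by (intro exI[of _ "\<lambda>i j. 0"]) (simp add: lin_form_zero zero_power)
  from sumpow_add[OF assms(3) this] show ?thesis using assms(2) by simp
qed

lemma complex_nth_root: assumes "1 \<le> d" shows "\<exists>\<beta>::complex. \<beta>^d = a"
proof -
  have "(rcis (root d (cmod a)) (Arg a / real d)) ^ d = rcis (root d (cmod a) ^ d) (real d * (Arg a / real d))"
    by (rule DeMoivre2)
  also have "\<dots> = rcis (cmod a) (Arg a)" using assms by simp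
  also have "\<dots> = a" by (rule rcis_cmod_Arg)
  finally show ?thesis by blast
qed

lemma sumpow_scale:
  assumes "1 \<le> d" "sumpow n d r P" shows "sumpow n d r (\<lambda>x. a * P x)"
proof -
  obtain L where L: "P = (\<lambda>x. \<Sum>i<r. lin_form n (L i) x ^ d)" using assms(2) sumpow_def by auto
  obtain \<beta> where b: "\<beta>^d = a" using complex_nth_root[OF assms(1)] by blast
  have "(\<lambda>x. a * P x) = (\<lambda>x. \<Sum>i<r. lin_form n (\<lambda>j. \<beta> * L i j) x ^ d)"
    by (simp add: L lin_form_scale sum_distrib_left power_mult_distrib b)
  then show ?thesis unfolding sumpow_def by (intro exI[of _ "\<lambda>i j. \<beta> * L i j"])
qed

lemma sumpow_sum_var:
  fixes s :: nat
  assumes "\<And>i. i < s \<Longrightarrow> sumpow n d (R i) (Q i)"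
  shows "sumpow n d (\<Sum>i<s. R i) (\<lambda>x. \<Sum>i<s. Q i x)"
  using assms
proof (induction s)
  case 0 then show ?case using sumpow_zero by simp
next
  case (Suc s)
  have "sumpow n d ((\<Sum>i<s. R i) + R s) (\<lambda>x. (\<Sum>i<s. Q i x) + Q s x)"
    using Suc by (intro sumpow_add) auto
  then show ?case by simp
qed

lemma sumpow_sum_set:
  assumes "finite S" "\<And>z. z \<in> S \<Longrightarrow> sumpow n d 1 (f z)"
  shows "sumpow n d (card S) (\<lambda>x. \<Sum>z\<in>S. f z x)"
  using assms
proof (induction S rule: finite_induct)
  case empty then show ?case using sumpow_zero by simp
next
  case (insert z S)
  have "sumpow n d (1 + card S) (\<lambda>x. f z x + (\<Sum>z\<in>S. f z x))"
    using insert by (intro sumpow_add) auto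
  then show ?case using insert by simp
qed



lemma coeff_pow_trunc:
  fixes p :: "'a::comm_ring_1 poly"
  assumes "k < m" shows "coeff ((p + monom a m)^d) k = coeff (p^d) k"
  using assms
proof (induction d arbitrary: k)
  case 0 then show ?case by simp
next
  case (Suc d)
  have "coeff ((p + monom a m)^Suc d) k = coeff (p * (p + monom a m)^d) k + coeff (monom a m * (p + monom a m)^d) k"
    by (simp add: algebra_simps)
  also have "coeff (monom a m * (p + monom a m)^d) k = 0" using Suc.prems by (simp add: coeff_monom_mult)
  also have "coeff (p * (p + monom a m)^d) k = (\<Sum>i\<le>k. coeff p i * coeff ((p + monom a m)^d) (k-i))"
    by (rule coeff_mult)
  also have "\<dots> = (\<Sum>i\<le>k. coeff p i * coeff (p^d) (k-i))"
    using Suc by (intro sum.cong refl) auto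
  also have "\<dots> = coeff (p^Suc d) k" by (simp add: coeff_mult)
  finally show ?case by simp
qed

definition jetL :: "nat \<Rightarrow> (nat \<Rightarrow> nat \<Rightarrow> complex) \<Rightarrow> nat \<Rightarrow> (nat \<Rightarrow> complex) \<Rightarrow> complex poly" where
  "jetL n A e x = (\<Sum>m<e. monom (lin_form n (A m) x) m)"

lemma jet_eq: "jet_power_coeff n d A e k x = coeff (jetL n A e x ^ d) k"
  by (simp add: jet_power_coeff_def jetL_def)

lemma jetL_degree: "degree (jetL n A e x) \<le> e - 1"
  unfolding jetL_def by (rule degree_le) (auto simp: coeff_sum coeff_monom)

lemma jetL_poly: "poly (jetL n A e x) z = lin_form n (\<lambda>j. \<Sum>m<e. z^m * A m j) x"
proof -
  have "poly (jetL n A e x) z = (\<Sum>m<e. (\<Sum>j\<le>n. A m j * x j) * z^m)"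
    unfolding jetL_def lin_form_def by (simp add: poly_sum poly_monom)
  also have "\<dots> = (\<Sum>m<e. \<Sum>j\<le>n. z^m * A m j * x j)"
    by (simp add: sum_distrib_left sum_distrib_right ac_simps)
  also have "\<dots> = (\<Sum>j\<le>n. \<Sum>m<e. z^m * A m j * x j)" by (rule sum.swap)
  also have "\<dots> = lin_form n (\<lambda>j. \<Sum>m<e. z^m * A m j) x"
    unfolding lin_form_def by (simp add: sum_distrib_right)
  finally show ?thesis .
qed

lemma comp:
  fixes c :: "nat \<Rightarrow> complex"
  assumes d2: "2 \<le> d"
  shows "sumpow n d ((e-1)*(d-1)+1) (\<lambda>x. \<Sum>k<e. c k * jet_power_coeff n d A e k x)"
  using assms
proof (induction e arbitrary: c)
  case 0
  then show ?case using sumpow_mono[OF _ _ sumpow_zero] by simp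
next
  case (Suc e)
  show ?case
  proof (cases "c e = 0")
    case True
    have "(\<lambda>x. \<Sum>k<Suc e. c k * jet_power_coeff n d A (Suc e) k x)
        = (\<lambda>x. \<Sum>k<e. c k * jet_power_coeff n d A e k x)"
    proof
      fix x
      have "jetL n A (Suc e) x = jetL n A e x + monom (lin_form n (A e) x) e"
        by (simp add: jetL_def)
      then have "\<And>k. k < e \<Longrightarrow> jet_power_coeff n d A (Suc e) k x = jet_power_coeff n d A e k x"
        by (simp add: jet_eq coeff_pow_trunc)
      then show "(\<Sum>k<Suc e. c k * jet_power_coeff n d A (Suc e) k x)
        = (\<Sum>k<e. c k * jet_power_coeff n d A e k x)" using True by simp
    qed
    moreover have "sumpow n d ((e-1)*(d-1)+1) (\<lambda>x. \<Sum>k<e. c k * jet_power_coeff n d A e k x)"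
      using Suc by blast
    moreover have "(e-1)*(d-1)+1 \<le> (Suc e - 1)*(d-1)+1" by (simp add: mult_right_mono)
    ultimately show ?thesis using sumpow_mono[of d "(e-1)*(d-1)+1" "(Suc e - 1)*(d-1)+1" n] d2 by simp
  next
    case False
    obtain S a where S: "finite S" "card S = d*(Suc e - 1) + 2 - Suc e"
      and U: "\<forall>F::complex poly. degree F \<le> d*(Suc e-1) \<longrightarrow>
        (\<Sum>k<Suc e. c k * coeff F k) = (\<Sum>z\<in>S. a z * poly F z)"
      using lemU[OF d2, of "Suc e" c] False by auto
    have eq: "(\<lambda>x. \<Sum>k<Suc e. c k * jet_power_coeff n d A (Suc e) k x)
       = (\<lambda>x. \<Sum>z\<in>S. a z * lin_form n (\<lambda>j. \<Sum>m<Suc e. z^m * A m j) x ^ d)"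
    proof
      fix x
      have "degree (jetL n A (Suc e) x ^ d) \<le> degree (jetL n A (Suc e) x) * d"
        by (rule degree_power_le)
      also have "\<dots> \<le> (Suc e - 1) * d" by (rule mult_right_mono[OF jetL_degree]) simp
      finally have "degree (jetL n A (Suc e) x ^ d) \<le> d*(Suc e-1)" by (simp add: mult.commute)
      then show "(\<Sum>k<Suc e. c k * jet_power_coeff n d A (Suc e) k x)
       = (\<Sum>z\<in>S. a z * lin_form n (\<lambda>j. \<Sum>m<Suc e. z^m * A m j) x ^ d)"
        using U by (simp add: jet_eq poly_power jetL_poly)
    qed
    have "sumpow n d (card S) (\<lambda>x. \<Sum>z\<in>S. a z * lin_form n (\<lambda>j. \<Sum>m<Suc e. z^m * A m j) x ^ d)"
      using S(1) by (rule sumpow_sum_set) (use d2 sumpow_scale sumpow_one in auto)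
    moreover have "card S = (Suc e - 1)*(d-1)+1"
    proof -
      have r: "(Suc e - 1)*(d-1)+1 = d*e - e + 1" by (simp add: diff_mult_distrib2 mult.commute)
      have le: "e \<le> d*e" using d2 by simp
      have c: "card S = Suc (d*e) - e" using S(2) by (simp add: mult.commute)
      show ?thesis unfolding r using c le by linarith
    qed
    ultimately show ?thesis using eq by simp
  qed
qed



definition anypow :: "nat \<Rightarrow> nat \<Rightarrow> ((nat \<Rightarrow> complex) \<Rightarrow> complex) \<Rightarrow> bool" where
  "anypow n d P \<longleftrightarrow> (\<exists>r. sumpow n d r P)"

lemma anypow_zero: "anypow n d (\<lambda>x. 0)" using sumpow_zero anypow_def by blast
lemma anypow_one: "anypow n d (\<lambda>x. lin_form n v x ^ d)" using sumpow_one anypow_def by blast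
lemma anypow_add: "anypow n d P \<Longrightarrow> anypow n d Q \<Longrightarrow> anypow n d (\<lambda>x. P x + Q x)"
  unfolding anypow_def using sumpow_add by blast
lemma anypow_scale: "1 \<le> d \<Longrightarrow> anypow n d P \<Longrightarrow> anypow n d (\<lambda>x. a * P x)"
  using sumpow_scale anypow_def by blast

lemma anypow_sum:
  assumes "\<And>z. z \<in> S \<Longrightarrow> anypow n d (f z)"
  shows "anypow n d (\<lambda>x. \<Sum>z\<in>S. f z x)"
proof (cases "finite S")
  case True
  then show ?thesis using assms
  proof (induction S rule: finite_induct)
    case empty then show ?case using anypow_zero by simp
  next
    case (insert z S)
    then have "anypow n d (\<lambda>x. f z x + (\<Sum>z\<in>S. f z x))" by (intro anypow_add) auto
    then show ?case using insert by simp
  qed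
next
  case False then show ?thesis using anypow_zero by simp
qed

lemma coeff_lin_pow1: "coeff ([:a,b:]^p) 1 = of_nat p * a^(p-1) * (b::complex)"
proof (induction p)
  case 0 then show ?case by simp
next
  case (Suc p)
  have "coeff ([:a,b:]^Suc p) 1 = a * coeff ([:a,b:]^p) 1 + b * coeff ([:a,b:]^p) 0"
    by (simp add: coeff_pCons split: nat.split)
  also have "\<dots> = a * (of_nat p * a^(p-1) * b) + b * a^p" using Suc by (simp add: coeff_0_power)
  also have "\<dots> = of_nat (Suc p) * a^p * b"
  proof (cases p)
    case 0 then show ?thesis by simp
  next
    case (Suc q) then show ?thesis by (simp add: algebra_simps)
  qed
  finally show ?case by simp
qed

lemma polar:
  assumes "1 \<le> d"
  shows "length ms \<le> d \<Longrightarrow>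
    anypow n d (\<lambda>x. lin_form n l x ^ (d - length ms) * prod_list (map (\<lambda>m. lin_form n m x) ms))"
proof (induction ms arbitrary: l)
  case Nil then show ?case using anypow_one by simp
next
  case (Cons m ms)
  define p where "p = d - length ms"
  have p1: "1 \<le> p" "p \<le> d" using Cons.prems unfolding p_def by auto
  define S :: "complex set" where "S = of_nat ` {..d}"
  have finS: "finite S" unfolding S_def by simp
  have cardS: "card S = Suc d" unfolding S_def by (subst card_image) (auto simp: inj_on_def)
  define G where "G x = [:lin_form n l x, lin_form n m x:]^p * [:prod_list (map (\<lambda>m. lin_form n m x) ms):]" for x
  have degG: "degree (G x) < card S" for x
  proof -
    have "degree (G x) \<le> degree ([:lin_form n l x, lin_form n m x:]^p)"
      unfolding G_def by (simp add: degree_mult_le[THEN order_trans])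
    also have "\<dots> \<le> degree [:lin_form n l x, lin_form n m x:] * p" by (rule degree_power_le)
    also have "\<dots> \<le> 1 * p" by (intro mult_right_mono) auto
    finally show ?thesis using cardS p1 by simp
  qed
  have c1: "coeff (G x) 1 = (\<Sum>z\<in>S. poly (G x) z * coeff (lagr S z) 1)" for x
  proof -
    have "G x = (\<Sum>z\<in>S. smult (poly (G x) z) (lagr S z))" by (rule interp[OF finS degG])
    then have "coeff (G x) 1 = coeff (\<Sum>z\<in>S. smult (poly (G x) z) (lagr S z)) 1" by simp
    then show ?thesis by (simp add: coeff_sum)
  qed
  have polyG: "poly (G x) z = lin_form n (\<lambda>j. l j + z * m j) x ^ p * prod_list (map (\<lambda>m. lin_form n m x) ms)" for x z
    by (simp add: G_def poly_power lin_form_add_scale algebra_simps)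
  have coeffG: "coeff (G x) 1 = of_nat p * lin_form n l x ^ (p-1) * lin_form n m x * prod_list (map (\<lambda>m. lin_form n m x) ms)" for x
  proof -
    have "coeff (G x) 1 = prod_list (map (\<lambda>m. lin_form n m x) ms) * coeff ([:lin_form n l x, lin_form n m x:]^p) 1"
      unfolding G_def by (simp add: mult.commute[of _ "[:_:]"])
    also have "coeff ([:lin_form n l x, lin_form n m x:]^p) 1 = of_nat p * lin_form n l x ^ (p-1) * lin_form n m x"
      by (rule coeff_lin_pow1)
    finally show ?thesis by (simp add: ac_simps)
  qed
  have "anypow n d (\<lambda>x. \<Sum>z\<in>S. (coeff (lagr S z) 1 / of_nat p) * (lin_form n (\<lambda>j. l j + z * m j) x ^ (d - length ms) * prod_list (map (\<lambda>m. lin_form n m x) ms)))"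
    using Cons.IH Cons.prems assms by (intro anypow_sum anypow_scale) auto
  moreover have "(\<lambda>x. \<Sum>z\<in>S. (coeff (lagr S z) 1 / of_nat p) * (lin_form n (\<lambda>j. l j + z * m j) x ^ (d - length ms) * prod_list (map (\<lambda>m. lin_form n m x) ms)))
     = (\<lambda>x. lin_form n l x ^ (d - length (m # ms)) * prod_list (map (\<lambda>m. lin_form n m x) (m # ms)))"
  proof
    fix x
    have "(\<Sum>z\<in>S. (coeff (lagr S z) 1 / of_nat p) * (lin_form n (\<lambda>j. l j + z * m j) x ^ (d - length ms) * prod_list (map (\<lambda>m. lin_form n m x) ms)))
       = coeff (G x) 1 / of_nat p"
      unfolding c1 polyG p_def by (simp add: sum_divide_distrib mult.commute)
    also have "\<dots> = lin_form n l x ^ (p-1) * (lin_form n m x * prod_list (map (\<lambda>m. lin_form n m x) ms))"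
      unfolding coeffG using p1 by simp
    also have "p - 1 = d - length (m # ms)" unfolding p_def by simp
    finally show "(\<Sum>z\<in>S. (coeff (lagr S z) 1 / of_nat p) * (lin_form n (\<lambda>j. l j + z * m j) x ^ (d - length ms) * prod_list (map (\<lambda>m. lin_form n m x) ms)))
     = lin_form n l x ^ (d - length (m # ms)) * prod_list (map (\<lambda>m. lin_form n m x) (m # ms))" by simp
  qed
  ultimately show ?case by simp
qed



definition unitv :: "nat \<Rightarrow> nat \<Rightarrow> complex" where "unitv j = (\<lambda>i. if i = j then 1 else 0)"

lemma lin_unitv: "j \<le> n \<Longrightarrow> lin_form n (unitv j) x = x j"
proof -
  assume j: "j \<le> n"
  have "lin_form n (unitv j) x = (\<Sum>i\<le>n. if i = j then x i else 0)"
    unfolding lin_form_def by (intro sum.cong refl) (simp add: unitv_def)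
  also have "\<dots> = x j" using j by simp
  finally show ?thesis .
qed

lemma length_concat_rep: "length (concat (map (\<lambda>j. replicate (\<alpha> j) (u j)) [0..<k])) = (\<Sum>j<k. \<alpha> j)"
  by (induction k) auto

lemma prod_concat_rep: "prod_list (map f (concat (map (\<lambda>j. replicate (\<alpha> j) (u j)) [0..<k]))) = (\<Prod>j<k. f (u j) ^ \<alpha> j)"
  for f :: "_ \<Rightarrow> 'a::comm_monoid_mult"
  by (induction k) (auto simp: map_concat)

lemma anypow_monomial:
  assumes "1 \<le> d" "(\<Sum>j\<le>n. \<alpha> j) = d"
  shows "anypow n d (\<lambda>x. \<Prod>j\<le>n. x j ^ \<alpha> j)"
proof -
  define ms where "ms = concat (map (\<lambda>j. replicate (\<alpha> j) (unitv j)) [0..<Suc n])"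
  have len: "length ms = d" unfolding ms_def length_concat_rep using assms(2)
    by (simp add: lessThan_Suc_atMost)
  have "anypow n d (\<lambda>x. lin_form n (\<lambda>j. 0) x ^ (d - length ms) * prod_list (map (\<lambda>m. lin_form n m x) ms))"
    by (rule polar[OF assms(1)]) (simp add: len)
  moreover have "(\<lambda>x. lin_form n (\<lambda>j. 0) x ^ (d - length ms) * prod_list (map (\<lambda>m. lin_form n m x) ms))
     = (\<lambda>x. \<Prod>j\<le>n. x j ^ \<alpha> j)"
  proof
    fix x
    have "prod_list (map (\<lambda>m. lin_form n m x) ms) = (\<Prod>j<Suc n. lin_form n (unitv j) x ^ \<alpha> j)"
      unfolding ms_def by (rule prod_concat_rep)
    also have "\<dots> = (\<Prod>j\<le>n. x j ^ \<alpha> j)"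
      by (simp add: lessThan_Suc_atMost lin_unitv)
    finally show "lin_form n (\<lambda>j. 0) x ^ (d - length ms) * prod_list (map (\<lambda>m. lin_form n m x) ms)
     = (\<Prod>j\<le>n. x j ^ \<alpha> j)" using len by simp
  qed
  ultimately show ?thesis by simp
qed

lemma form_anypow:
  assumes "1 \<le> d" "is_form n d P" shows "anypow n d P"
proof -
  obtain c where P: "P = (\<lambda>x. \<Sum>\<alpha>\<in>exps n d. c \<alpha> * (\<Prod>j\<le>n. x j ^ \<alpha> j))"
    using assms(2) is_form_def by auto
  show ?thesis unfolding P
    by (intro anypow_sum anypow_scale assms(1) anypow_monomial) (auto simp: exps_def)
qed

lemma sum_upd_add:
  fixes c :: "nat \<Rightarrow> complex"
  assumes "i < s"
  shows "(\<Sum>i'<s. (c(i := c i + t)) i' * g i') = (\<Sum>i'<s. c i' * g i') + t * g i"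
proof -
  have "(\<Sum>i'<s. (c(i := c i + t)) i' * g i') = (\<Sum>i'<s. c i' * g i' + (if i' = i then t * g i else 0))"
    by (intro sum.cong refl) (auto simp: algebra_simps)
  also have "\<dots> = (\<Sum>i'<s. c i' * g i') + t * g i" using assms by (simp add: sum.distrib)
  finally show ?thesis .
qed

lemma decomp:
  assumes "1 \<le> d"
  shows "sumpow n d r P \<Longrightarrow> \<exists>s::nat. \<exists>A c. (\<forall>i<s. \<exists>j\<le>n. A i j \<noteq> 0) \<and>
     (\<forall>i<s. \<forall>i'<s. i \<noteq> i' \<longrightarrow> \<not> proportional n (A i) (A i')) \<and>
     P = (\<lambda>x. \<Sum>i<s. c i * lin_form n (A i) x ^ d)"
proof (induction r arbitrary: P)
  case 0
  then have "P = (\<lambda>x. 0)" by (simp add: sumpow_def)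
  then show ?case by (intro exI[of _ "0::nat"]) simp
next
  case (Suc r)
  obtain L where L: "P = (\<lambda>x. \<Sum>i<Suc r. lin_form n (L i) x ^ d)" using Suc.prems sumpow_def by auto
  have "sumpow n d r (\<lambda>x. \<Sum>i<r. lin_form n (L i) x ^ d)" unfolding sumpow_def by blast
  from Suc.IH[OF this] obtain s :: nat and A c where nz: "\<forall>i<s. \<exists>j\<le>n. A i j \<noteq> 0"
    and np: "\<forall>i<s. \<forall>i'<s. i \<noteq> i' \<longrightarrow> \<not> proportional n (A i) (A i')"
    and P': "(\<lambda>x. \<Sum>i<r. lin_form n (L i) x ^ d) = (\<lambda>x. \<Sum>i<s. c i * lin_form n (A i) x ^ d)" by blast
  define v where "v = L r"
  have P: "P = (\<lambda>x. (\<Sum>i<s. c i * lin_form n (A i) x ^ d) + lin_form n v x ^ d)"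
    unfolding L v_def using P' by (simp add: fun_eq_iff)
  show ?case
  proof (cases "\<forall>j\<le>n. v j = 0")
    case True
    then have "\<And>x. lin_form n v x = 0" by (simp add: lin_form_def)
    then show ?thesis using nz np assms unfolding P by (intro exI[of _ s] exI[of _ A] exI[of _ c]) (simp add: zero_power)
  next
    case False
    then obtain j0 where j0: "j0 \<le> n" "v j0 \<noteq> 0" by auto
    show ?thesis
    proof (cases "\<exists>i<s. proportional n (A i) v")
      case True
      then obtain i \<kappa> where i: "i < s" and k: "\<forall>j\<le>n. v j = \<kappa> * A i j"
        unfolding proportional_def by auto
      have lv: "lin_form n v x = \<kappa> * lin_form n (A i) x" for x
        unfolding lin_form_def using k by (simp add: sum_distrib_left mult.assoc)
      have "P = (\<lambda>x. \<Sum>i'<s. (c(i := c i + \<kappa>^d)) i' * lin_form n (A i') x ^ d)"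
      proof -
        have eqs: "(\<Sum>i'<s. (c(i := c i + \<kappa>^d)) i' * lin_form n (A i') x ^ d) = (\<Sum>i'<s. c i' * lin_form n (A i') x ^ d) + \<kappa>^d * lin_form n (A i) x ^ d" for x
          by (rule sum_upd_add[OF i])
        show ?thesis unfolding eqs P lv power_mult_distrib by simp
      qed
      then show ?thesis using nz np by blast
    next
      case notp: False
      define A' where "A' = A(s := v)"
      define c' where "c' = c(s := 1)"
      have "P = (\<lambda>x. \<Sum>i<Suc s. c' i * lin_form n (A' i) x ^ d)"
        unfolding P A'_def c'_def by simp
      moreover have "\<forall>i<Suc s. \<exists>j\<le>n. A' i j \<noteq> 0"
        using nz j0 by (auto simp: A'_def less_Suc_eq)
      moreover have "\<forall>i<Suc s. \<forall>i'<Suc s. i \<noteq> i' \<longrightarrow> \<not> proportional n (A' i) (A' i')"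
      proof (intro allI impI)
        fix i i' assume ii: "i < Suc s" "i' < Suc s" "i \<noteq> i'"
        show "\<not> proportional n (A' i) (A' i')"
        proof (cases "i < s \<and> i' < s")
          case True then show ?thesis using np ii by (simp add: A'_def)
        next
          case False
          then have "(i = s \<and> i' < s) \<or> (i < s \<and> i' = s)" using ii by auto
          then show ?thesis
          proof
            assume "i < s \<and> i' = s"
            then show ?thesis using notp by (auto simp: A'_def)
          next
            assume a: "i = s \<and> i' < s"
            show ?thesis
            proof
              assume "proportional n (A' i) (A' i')"
              then obtain \<kappa> where k: "\<forall>j\<le>n. A i' j = \<kappa> * v j"
                using a by (auto simp: A'_def proportional_def)
              obtain j1 where j1: "j1 \<le> n" "A i' j1 \<noteq> 0" using nz a by auto
              have "\<kappa> \<noteq> 0" using k j1 by auto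
              then have "\<forall>j\<le>n. v j = inverse \<kappa> * A i' j" using k by (simp add: field_simps)
              then have "proportional n (A i') v" unfolding proportional_def by blast
              then show False using notp a by auto
            qed
          qed
        qed
      qed
      ultimately show ?thesis by blast
    qed
  qed
qed

lemma data_exists:
  assumes "1 \<le> d" "is_form n d P"
  shows "\<exists>r s e A. curvilinear_data n s e A \<and> (\<Sum>i<s. e i) = r \<and> in_curvilinear_span n d s e A P"
proof -
  obtain r where "sumpow n d r P" using form_anypow[OF assms] anypow_def by auto
  from decomp[OF assms(1) this] obtain s :: nat and A c where nz: "\<forall>i<s. \<exists>j\<le>n. A i j \<noteq> 0"
    and np: "\<forall>i<s. \<forall>i'<s. i \<noteq> i' \<longrightarrow> \<not> proportional n (A i) (A i')"
    and P: "P = (\<lambda>x. \<Sum>i<s. c i * lin_form n (A i) x ^ d)" by blast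
  have "curvilinear_data n s (\<lambda>i. 1::nat) (\<lambda>i m. A i)"
    unfolding curvilinear_data_def using nz np by auto
  moreover have "in_curvilinear_span n d s (\<lambda>i. 1::nat) (\<lambda>i m. A i) P"
    unfolding in_curvilinear_span_def P
    by (rule exI[of _ "\<lambda>i k. c i"]) (simp add: jet_power_coeff_def coeff_0_power)
  ultimately show ?thesis by blast
qed

lemma arith_bound:
  fixes e :: "nat \<Rightarrow> nat"
  assumes "\<forall>i<s. 1 \<le> e i" "1 \<le> s" "2 \<le> d"
  shows "(\<Sum>i<s. (e i - 1)*(d-1)+1) \<le> ((\<Sum>i<s. e i) - 1)*(d-1)+1"
  using assms
proof (induction s)
  case 0 then show ?case by simp
next
  case (Suc s)
  show ?case
  proof (cases "s = 0")
    case True then show ?thesis by simp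
  next
    case False
    then have IH: "(\<Sum>i<s. (e i - 1)*(d-1)+1) \<le> ((\<Sum>i<s. e i) - 1)*(d-1)+1" using Suc by auto
    have "e 0 \<le> (\<Sum>i<s. e i)" using False by (intro member_le_sum) auto
    moreover have "1 \<le> e 0" using Suc.prems by auto
    ultimately have E1: "1 \<le> (\<Sum>i<s. e i)" by linarith
    define a where "a = (\<Sum>i<s. e i) - 1"
    have a: "(\<Sum>i<s. e i) = a + 1" using E1 a_def by simp
    define b where "b = e s - 1"
    have "1 \<le> e s" using Suc.prems by auto
    then have b: "e s = b + 1" using b_def by simp
    define k where "k = d - 2"
    have k: "d - 1 = k + 1" using Suc.prems k_def by simp
    have "(\<Sum>i<Suc s. (e i - 1)*(d-1)+1) = (\<Sum>i<s. (e i - 1)*(d-1)+1) + (b*(k+1)+1)"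
      using b k by simp
    also have "\<dots> \<le> a*(k+1)+1 + (b*(k+1)+1)" using IH a k by simp
    also have "\<dots> \<le> (a+b+1)*(k+1)+1" by (simp add: algebra_simps)
    also have "\<dots> = ((\<Sum>i<Suc s. e i) - 1)*(d-1)+1" using a b k by simp
    finally show ?thesis .
  qed
qed



theorem theorem1:
  fixes n d :: nat and P :: "(nat \<Rightarrow> complex) \<Rightarrow> complex"
  assumes "1 \<le> n" and "2 \<le> d" and "is_form n d P" and "P \<noteq> (\<lambda>x. 0)"
  shows "int (waring_rank n d P) \<le>
           (int (curvilinear_rank n d P) - 1) * int d + 2 - int (curvilinear_rank n d P)"
proof -
  have d1: "1 \<le> d" using assms(2) by simp
  define Cr where "Cr = curvilinear_rank n d P"
  have "\<exists>s e A. curvilinear_data n s e A \<and> (\<Sum>i<s. e i) = Cr \<and> in_curvilinear_span n d s e A P"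
    unfolding Cr_def curvilinear_rank_def
    by (rule LeastI_ex) (rule data_exists[OF d1 assms(3)])
  then obtain s :: nat and e A where cd: "curvilinear_data n s e A" and sE: "(\<Sum>i<s. e i) = Cr"
    and sp: "in_curvilinear_span n d s e A P" by blast
  obtain c where P: "P = (\<lambda>x. \<Sum>i<s. \<Sum>k<e i. c i k * jet_power_coeff n d (A i) (e i) k x)"
    using sp unfolding in_curvilinear_span_def by blast
  have e1: "\<forall>i<s. 1 \<le> e i" using cd unfolding curvilinear_data_def by blast
  have s1: "1 \<le> s"
  proof (rule ccontr)
    assume "\<not> 1 \<le> s" then have "s = 0" by simp
    then show False using P assms(4) by simp
  qed
  have "sumpow n d (\<Sum>i<s. (e i - 1)*(d-1)+1) P"
    unfolding P by (rule sumpow_sum_var) (rule comp[OF assms(2)])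
  then have "waring_rank n d P \<le> (\<Sum>i<s. (e i - 1)*(d-1)+1)"
    unfolding waring_rank_def sumpow_def by (rule Least_le)
  also have "\<dots> \<le> (Cr - 1)*(d-1)+1" using arith_bound[OF e1 s1 assms(2)] sE by simp
  finally have W: "waring_rank n d P \<le> (Cr - 1)*(d-1)+1" .
  have Cr1: "1 \<le> Cr"
  proof -
    have "e 0 \<le> (\<Sum>i<s. e i)" using s1 by (intro member_le_sum) auto
    then show ?thesis using e1 s1 sE by fastforce
  qed
  have "int ((Cr - 1)*(d-1)+1) = (int Cr - 1) * (int d - 1) + 1"
    using Cr1 assms(2) by (simp add: of_nat_diff)
  also have "\<dots> = (int Cr - 1) * int d + 2 - int Cr" by (simp add: algebra_simps)
  finally show ?thesis using W unfolding Cr_def by linarith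
qed

end
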